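(* In the two-stage mining game, suppose miners are homogeneous in their initial costs, $\tilde c_1=\dots=\tilde c_N$, and $\gamma>0$. Fix all parameters except $\eta$ and consider $\eta$ large enough that $A(\beta^* )=A(0)=\{1,\dots,n\}$. Then, as $\eta\to\infty$, $$\Pi^*(\beta^* )=\Pi^*(0)+b\,H^*(0)\,\bar I+O(\bar I^2),\qquad b:=\frac1n\Big(1-\frac{c_0^{(n)}+\gamma H^*(0)}{c_0^{(n)}+2\gamma H^*(0)}\Big)>0,$$ and $b\to0$ as $\gamma\to0$. Here $O(\bar I^2)$ denotes a remainder bounded in absolute value by $C\bar I^2$ for some constant $C$ and all sufficiently large $\eta$.
   Context: Two-stage mining game: $N\ge2$ miners with initial costs-per-hash $\tilde c_i>0$; newest hardware cost $\tilde c_0\le\min_i\tilde c_i$; parameters $\eta\ge0$, $R>0$, $\gamma\ge0$, $K>0$. Stage 1: miner $i$ picks $\beta_i\in[0,1]$, giving cost $c_i(\beta_i)=\tilde c_i-\beta_i(\tilde c_i-\tilde c_0)+\frac{\eta(\tilde c_i-\tilde c_0)}{2}\beta_i^2$. Stage 2: given $\beta$, miners pick $h_i\ge0$, $H=\sum_jh_j$, payoff $\pi_i=\frac{h_i}{H}R-c_i(\beta_i)h_i-\frac{\gamma}{2}h_i^2-K\mathbf 1_{\{i\notin A(0),\beta_i>0\}}$ if $H>0$, else $0$; $h^*(\beta)$ is the unique stage-2 pure Nash equilibrium, $H^*(\beta)=\sum_jh_j^*(\beta)$, $A(\beta)=\{i:h_i^*(\beta)>0\}$, $\pi_i^*(\beta)$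 is miner $i$'s payoff at $(\beta,h^*(\beta))$, and $\Pi^*(\beta)=\sum_{i=1}^n\pi_i^*(\beta)$ is the aggregate profit. The equilibrium investment is $\beta_i^*=\min\{1/\eta,1\}$ for active miners and $0$ otherwise. Notation: $c_0^{(n)}=\sum_{i=1}^n\tilde c_i$; $I_i:=c_i(0)-c_i(\beta_i^* )$, equal to $(\tilde c_i-\tilde c_0)/(2\eta)$ for $\eta>1$; $\bar I=\sum_{i=1}^nI_i$. *)

theory Defs
  imports Complex_Main
begin

text \<open>Two-stage mining game. Miners are indexed by 1..n. Initial costs-per-hash ct i,
  newest hardware cost c0, parameters eta, R, gam (gamma), K.\<close>

definition cost :: "real \<Rightarrow> real \<Rightarrow> real \<Rightarrow> real \<Rightarrow> real" where
  "cost cti c0 eta b = cti - b * (cti - c0) + eta * (cti - c0) / 2 * b ^ 2"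

text \<open>Stage-2 payoff of miner i, given the set A0 = A(0) (entering the fixed-cost indicator),
  the investment profile beta, the cost vector cv (cv i = c_i(beta_i)) and the hash profile h.\<close>
definition payoff ::
  "nat \<Rightarrow> real \<Rightarrow> real \<Rightarrow> real \<Rightarrow> nat set \<Rightarrow> (nat \<Rightarrow> real) \<Rightarrow> (nat \<Rightarrow> real) \<Rightarrow> (nat \<Rightarrow> real) \<Rightarrow> nat \<Rightarrow> real"
  where
  "payoff n R gam K A0 beta cv h i =
     (let H = (\<Sum>j\<in>{1..n}. h j) in
      if H > 0 then h i / H * R - cv i * h i - gam / 2 * (h i) ^ 2
                    - (if i \<notin> A0 \<and> beta i > 0 then K else 0)
      else 0)"

definition is_NE ::
  "nat \<Rightarrow> real \<Rightarrow> real \<Rightarrow> real \<Rightarrow> nat set \<Rightarrow> (nat \<Rightarrow> real) \<Rightarrow> (nat \<Rightarrow> real) \<Rightarrow> (nat \<Rightarrow> real) \<Rightarrow> bool"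
  where
  "is_NE n R gam K A0 beta cv h \<longleftrightarrow>
     (\<forall>i. i \<notin> {1..n} \<longrightarrow> h i = 0) \<and>
     (\<forall>i\<in>{1..n}. h i \<ge> 0 \<and>
        (\<forall>x\<ge>0. payoff n R gam K A0 beta cv (h(i := x)) i \<le> payoff n R gam K A0 beta cv h i))"

definition hNE ::
  "nat \<Rightarrow> real \<Rightarrow> real \<Rightarrow> real \<Rightarrow> nat set \<Rightarrow> (nat \<Rightarrow> real) \<Rightarrow> (nat \<Rightarrow> real) \<Rightarrow> nat \<Rightarrow> real"
  where
  "hNE n R gam K A0 beta cv = (THE h. is_NE n R gam K A0 beta cv h)"

text \<open>A(0): active set at beta = 0 (there the fixed-cost indicator vanishes, so A0 is irrelevant).\<close>
definition Azero :: "nat \<Rightarrow> (nat \<Rightarrow> real) \<Rightarrow> real \<Rightarrow> real \<Rightarrow> real \<Rightarrow> nat set" where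
  "Azero n ct R gam K = {i\<in>{1..n}. hNE n R gam K {} (\<lambda>_. 0) ct i > 0}"

definition hstar ::
  "nat \<Rightarrow> (nat \<Rightarrow> real) \<Rightarrow> real \<Rightarrow> real \<Rightarrow> real \<Rightarrow> real \<Rightarrow> real \<Rightarrow> (nat \<Rightarrow> real) \<Rightarrow> nat \<Rightarrow> real"
  where
  "hstar n ct c0 eta R gam K beta =
     hNE n R gam K (Azero n ct R gam K) beta (\<lambda>i. cost (ct i) c0 eta (beta i))"

definition Hstar ::
  "nat \<Rightarrow> (nat \<Rightarrow> real) \<Rightarrow> real \<Rightarrow> real \<Rightarrow> real \<Rightarrow> real \<Rightarrow> real \<Rightarrow> (nat \<Rightarrow> real) \<Rightarrow> real"
  where
  "Hstar n ct c0 eta R gam K beta = (\<Sum>j\<in>{1..n}. hstar n ct c0 eta R gam K beta j)"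

definition Astar ::
  "nat \<Rightarrow> (nat \<Rightarrow> real) \<Rightarrow> real \<Rightarrow> real \<Rightarrow> real \<Rightarrow> real \<Rightarrow> real \<Rightarrow> (nat \<Rightarrow> real) \<Rightarrow> nat set"
  where
  "Astar n ct c0 eta R gam K beta = {i\<in>{1..n}. hstar n ct c0 eta R gam K beta i > 0}"

definition Pistar ::
  "nat \<Rightarrow> (nat \<Rightarrow> real) \<Rightarrow> real \<Rightarrow> real \<Rightarrow> real \<Rightarrow> real \<Rightarrow> real \<Rightarrow> (nat \<Rightarrow> real) \<Rightarrow> real"
  where
  "Pistar n ct c0 eta R gam K beta =
     (\<Sum>i\<in>{1..n}. payoff n R gam K (Azero n ct R gam K) beta
                    (\<lambda>j. cost (ct j) c0 eta (beta j)) (hstar n ct c0 eta R gam K beta) i)"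

definition betastar :: "nat \<Rightarrow> (nat \<Rightarrow> real) \<Rightarrow> real \<Rightarrow> real \<Rightarrow> real \<Rightarrow> real \<Rightarrow> nat \<Rightarrow> real" where
  "betastar n ct eta R gam K i = (if i \<in> Azero n ct R gam K then min (1 / eta) 1 else 0)"

definition Ibar :: "nat \<Rightarrow> (nat \<Rightarrow> real) \<Rightarrow> real \<Rightarrow> real \<Rightarrow> real \<Rightarrow> real \<Rightarrow> real \<Rightarrow> real" where
  "Ibar n ct c0 eta R gam K =
     (\<Sum>i\<in>{1..n}. cost (ct i) c0 eta 0 - cost (ct i) c0 eta (betastar n ct eta R gam K i))"

definition csum :: "nat \<Rightarrow> (nat \<Rightarrow> real) \<Rightarrow> real" where
  "csum n ct = (\<Sum>i\<in>{1..n}. ct i)"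

definition bcoef :: "nat \<Rightarrow> (nat \<Rightarrow> real) \<Rightarrow> real \<Rightarrow> real \<Rightarrow> real \<Rightarrow> real \<Rightarrow> real \<Rightarrow> real" where
  "bcoef n ct c0 eta R gam K =
     (let H0 = Hstar n ct c0 eta R gam K (\<lambda>_. 0) in
      1 / real n * (1 - (csum n ct + gam * H0) / (csum n ct + 2 * gam * H0)))"

end

theory Submission
  imports Defs
begin


definition Hr :: "real \<Rightarrow> real \<Rightarrow> real \<Rightarrow> real \<Rightarrow> real" where
  "Hr m R g c = (-(m*c) + sqrt((m*c)^2 + 4*g*R*(m-1)))/(2*g)"



lemma Hr_prop:
  fixes m R g c :: real
  assumes m: "m \<ge> 2" and R: "R > 0" and g: "g > 0" and c: "c > 0"
  shows "Hr m R g c > 0 \<and> g*(Hr m R g c)^2 + m*c*(Hr m R g c) = R*(m-1)"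
proof -
  define D where "D = (m*c)^2 + 4*g*R*(m-1)"
  define s where "s = sqrt D"
  have Dgt: "D > (m*c)^2" using m R g unfolding D_def by simp
  have s2: "s^2 = D" unfolding s_def using Dgt
    by (metis less_le_not_le not_le real_sqrt_pow2 zero_le_power2 order.trans) 
  have sgt: "s > m*c"
  proof -
    have "sqrt ((m*c)^2) < s" unfolding s_def using Dgt real_sqrt_less_mono by blast
    moreover have "sqrt ((m*c)^2) = m*c" using m c by simp
    ultimately show ?thesis by simp
  qed
  have H: "Hr m R g c = (s - m*c)/(2*g)" unfolding Hr_def s_def D_def by simp
  show ?thesis
  proof
    show "Hr m R g c > 0" using H sgt g by simp
    have "g*((s - m*c)/(2*g))^2 + m*c*((s - m*c)/(2*g)) = (s^2 - (m*c)^2)/(4*g)"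
      using g by (simp add: field_simps power2_eq_square)
    also have "\<dots> = R*(m-1)" using s2 g unfolding D_def by (simp add: field_simps)
    finally show "g*(Hr m R g c)^2 + m*c*(Hr m R g c) = R*(m-1)" using H by simp
  qed
qed

lemma root_unique:
  fixes m g c x y Q :: real
  assumes "g > 0" "m*c \<ge> 0" "x > 0" "y > 0" "g*x^2 + m*c*x = Q" "g*y^2 + m*c*y = Q"
  shows "x = y"
proof -
  have "(x - y)*(g*(x+y) + m*c) = 0" using assms(5,6) by (simp add: algebra_simps power2_eq_square)
  moreover have "g*(x+y) + m*c > 0" using assms by (simp add: add_pos_nonneg)
  ultimately show ?thesis by simp
qed

lemma f_deriv:
  fixes S R c g x :: real
  assumes "x + S \<noteq> 0"
  shows "((\<lambda>x. x/(x+S)*R - c*x - g/2*x^2) has_real_derivative (R*S/(x+S)^2 - c - g*x)) (at x)"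
proof -
  have "((\<lambda>x. x/(x+S)*R - c*x - g/2*x^2) has_real_derivative
     ((1*(x+S) - x*(1+0))/((x+S)*(x+S))*R - c*1 - g/2*(of_nat 2 * x^(2-1)*1))) (at x)"
    by (rule derivative_eq_intros refl | simp add: assms)+
  moreover have "(1*(x+S) - x*(1+0))/((x+S)*(x+S))*R - c*1 - g/2*(of_nat 2 * x^(2-1)*1)
     = R*S/(x+S)^2 - c - g*x" using assms by (simp add: field_simps power2_eq_square)
  ultimately show ?thesis by simp
qed

lemma conc:
  fixes S h0 x R g c :: real
  assumes S: "S > 0" and h0: "h0 > 0" and x: "x \<ge> 0" and R: "R > 0" and g: "g > 0"
    and foc: "c = R*S/(h0+S)^2 - g*h0"
  shows "x/(x+S)*R - c*x - g/2*x^2 \<le> h0/(h0+S)*R - c*h0 - g/2*h0^2"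
proof -
  define P where "P = h0 + S"
  have P: "P > 0" "x + S > 0" using S h0 x unfolding P_def by auto
  have e1: "h0/P*R - x/(x+S)*R = R*S*(h0-x)/(P*(x+S))"
    using P unfolding P_def by (simp add: field_simps)
  have e2: "R*S*(h0-x)/(P*(x+S)) - R*S/P^2*(h0-x) = (h0-x)*(R*S/(P^2*(x+S)))*(h0-x)"
  proof -
    have h0e: "h0 = P - S" unfolding P_def by simp
    have nz: "P \<noteq> 0" "x + S \<noteq> 0" "S + x \<noteq> 0" "P*(x+S) \<noteq> 0" "P*S + P*x \<noteq> 0"
      using P mult_pos_pos[of P "S+x"] by (auto simp: algebra_simps)
    have f0: "\<And>a b::real. a \<noteq> 0 \<Longrightarrow> b \<noteq> 0 \<Longrightarrow> 1/(a*b) - 1/a^2 = (a - b)/(a^2*b)"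
      by (simp add: field_simps power2_eq_square)
    have f1: "1/(P*(x+S)) - 1/P^2 = (P - (x+S))/(P^2*(x+S))" using nz f0 by blast
    have "R*S*(h0-x)/(P*(x+S)) - R*S/P^2*(h0-x) = R*S*(h0-x)*(1/(P*(x+S)) - 1/P^2)"
      by (simp add: divide_inverse algebra_simps)
    also have "\<dots> = R*S*(h0-x)*((h0-x)/(P^2*(x+S)))" unfolding f1 h0e by simp
    finally show ?thesis by simp
  qed
  have sA: "(h0/(h0+S)*R - c*h0 - g/2*h0^2) - (x/(x+S)*R - c*x - g/2*x^2)
      = (h0/P*R - x/(x+S)*R) - c*(h0-x) - g/2*(h0-x)*(h0+x)"
    unfolding P_def by (simp add: algebra_simps power2_eq_square) (simp add: field_simps)
  have sB: "c*(h0-x) = R*S/P^2*(h0-x) - g*h0*(h0-x)"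
    unfolding foc P_def by (simp add: algebra_simps)
  define W where "W = R*S/(P^2*(x+S))"
  have "(h0/(h0+S)*R - c*h0 - g/2*h0^2) - (x/(x+S)*R - c*x - g/2*x^2)
      = (h0-x)*W*(h0-x) + g*h0*(h0-x) - g/2*(h0-x)*(h0+x)"
    unfolding sA sB using e1 e2 unfolding W_def by simp
  also have "\<dots> = (h0-x)^2*(W + g/2)"
    by (simp add: algebra_simps power2_eq_square) (simp add: field_simps)
  also have "\<dots> = (h0-x)^2*(R*S/((h0+S)^2*(x+S)) + g/2)"
    unfolding W_def P_def ..
  finally have "(h0/(h0+S)*R - c*h0 - g/2*h0^2) - (x/(x+S)*R - c*x - g/2*x^2)
      = (h0-x)^2*(R*S/((h0+S)^2*(x+S)) + g/2)" .
  moreover have "(h0-x)^2*(R*S/((h0+S)^2*(x+S)) + g/2) \<ge> 0"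
    using S h0 x R g by (intro mult_nonneg_nonneg add_nonneg_nonneg) auto
  ultimately show ?thesis by linarith
qed


lemma sum_upd:
  fixes h :: "nat \<Rightarrow> real"
  assumes "i \<in> {1..n}"
  shows "(\<Sum>j\<in>{1..n}. (h(i:=x)) j) = x + ((\<Sum>j\<in>{1..n}. h j) - h i)"
proof -
  have "(\<Sum>j\<in>{1..n}. (h(i:=x)) j) = (h(i:=x)) i + (\<Sum>j\<in>{1..n}-{i}. (h(i:=x)) j)"
    using assms by (simp add: sum.remove)
  also have "(\<Sum>j\<in>{1..n}-{i}. (h(i:=x)) j) = (\<Sum>j\<in>{1..n}-{i}. h j)"
    by (rule sum.cong) auto
  also have "(\<Sum>j\<in>{1..n}-{i}. h j) = (\<Sum>j\<in>{1..n}. h j) - h i"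
    using assms by (simp add: sum.remove)
  finally show ?thesis by simp
qed

lemma payoff_eq:
  assumes "i \<in> {1..n}" "cv i = c" "\<not> (i \<notin> A0 \<and> 0 < beta i)"
  shows "payoff n R g K A0 beta cv h i = (if (\<Sum>j\<in>{1..n}. h j) > 0
     then h i/(\<Sum>j\<in>{1..n}. h j)*R - c*h i - g/2*(h i)^2 else 0)"
  using assms unfolding payoff_def Let_def by auto

lemma payoff_dev:
  assumes "i \<in> {1..n}" "cv i = c" "\<not> (i \<notin> A0 \<and> 0 < beta i)"
  shows "payoff n R g K A0 beta cv (h(i:=x)) i = (if x + ((\<Sum>j\<in>{1..n}. h j) - h i) > 0
     then x/(x + ((\<Sum>j\<in>{1..n}. h j) - h i))*R - c*x - g/2*x^2 else 0)"
  using payoff_eq[of i n cv c A0 beta R g K "h(i:=x)"] assms sum_upd[OF assms(1), of h x] by simp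

lemma sum_rest_nonneg:
  fixes h :: "nat \<Rightarrow> real"
  assumes "i \<in> {1..n}" "\<forall>j\<in>{1..n}. h j \<ge> 0"
  shows "(\<Sum>j\<in>{1..n}. h j) - h i \<ge> 0"
proof -
  have "(\<Sum>j\<in>{1..n}. h j) - h i = (\<Sum>j\<in>{1..n}-{i}. h j)"
    using assms by (simp add: sum.remove)
  also have "\<dots> \<ge> 0" using assms by (intro sum_nonneg) auto
  finally show ?thesis .
qed

lemma NE_char:
  fixes n :: nat and R g K c :: real
  assumes n2: "n \<ge> 2" and R: "R > 0" and g: "g > 0" and c: "c > 0"
    and cv: "\<forall>i\<in>{1..n}. cv i = c"
    and noK: "\<forall>i\<in>{1..n}. \<not> (i \<notin> AZ \<and> 0 < beta i)"
  shows "hNE n R g K AZ beta cv = (\<lambda>i. if i \<in> {1..n} then Hr n R g c / n else 0)"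
proof -
  define Hs where "Hs = Hr n R g c"
  have n2r: "real n \<ge> 2" using n2 by simp
  have Hs: "Hs > 0" "g*Hs^2 + n*c*Hs = R*(real n-1)" using Hr_prop[OF n2r R g c] unfolding Hs_def by auto
  define h0 where "h0 = (\<lambda>i. if i \<in> {1..n} then Hs / n else (0::real))"
  have sum_h0: "(\<Sum>j\<in>{1..n}. h0 j) = Hs" unfolding h0_def using n2 by simp
  have ex: "is_NE n R g K AZ beta cv h0"
    unfolding is_NE_def
  proof (intro conjI ballI allI impI)
    fix i assume "i \<notin> {1..n}" then show "h0 i = 0" unfolding h0_def by auto
  next
    fix i assume i: "i \<in> {1..n}"
    show "h0 i \<ge> 0" using i Hs unfolding h0_def by simp
  next
    fix i x assume i: "i \<in> {1..n}" and x: "(x::real) \<ge> 0"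
    define S where "S = Hs - Hs/n"
    have hi: "h0 i = Hs/n" using i unfolding h0_def by simp
    have S: "S > 0" unfolding S_def using Hs n2 by (simp add: field_simps)
    have hS: "Hs/n + S = Hs" unfolding S_def by simp
    have pos: "Hs/n > 0" using Hs n2 by simp
    have foc: "c = R*S/(Hs/n+S)^2 - g*(Hs/n)"
    proof -
      have "R*S/(Hs/n+S)^2 - g*(Hs/n) = (R*(real n-1) - g*Hs^2)/(n*Hs)"
        unfolding hS S_def using Hs n2 by (simp add: field_simps power2_eq_square)
      also have "\<dots> = c" using Hs n2 by (simp add: field_simps)
      finally show ?thesis by simp
    qed
    have "payoff n R g K AZ beta cv (h0(i:=x)) i = x/(x+S)*R - c*x - g/2*x^2"
      using payoff_dev[of i n cv c AZ beta R g K h0 x] cv noK i S x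
      unfolding sum_h0 hi S_def by auto
    also have "\<dots> \<le> (Hs/n)/(Hs/n+S)*R - c*(Hs/n) - g/2*(Hs/n)^2"
      by (rule conc[OF S pos x R g foc])
    also have "\<dots> = payoff n R g K AZ beta cv h0 i"
      using payoff_eq[of i n cv c AZ beta R g K h0] cv noK i Hs
      unfolding sum_h0 hi hS by auto
    finally show "payoff n R g K AZ beta cv (h0(i:=x)) i \<le> payoff n R g K AZ beta cv h0 i" .
  qed
  have un: "h = h0" if NE: "is_NE n R g K AZ beta cv h" for h
  proof -
    from NE have out: "\<forall>i. i \<notin> {1..n} \<longrightarrow> h i = 0" and nn: "\<forall>i\<in>{1..n}. h i \<ge> 0"
      and best: "\<forall>i\<in>{1..n}. \<forall>x\<ge>0. payoff n R g K AZ beta cv (h(i := x)) i \<le> payoff n R g K AZ beta cv h i"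
      unfolding is_NE_def by auto
    define T where "T = (\<Sum>j\<in>{1..n}. h j)"
    have pd: "payoff n R g K AZ beta cv (h(i:=x)) i = (if x + (T - h i) > 0
       then x/(x + (T - h i))*R - c*x - g/2*x^2 else 0)" if i: "i \<in> {1..n}" for i x
      using payoff_dev[of i n cv c AZ beta R g K h x] i cv noK unfolding T_def by auto
    have pe: "payoff n R g K AZ beta cv h i = (if T > 0
       then h i/T*R - c*h i - g/2*(h i)^2 else 0)" if i: "i \<in> {1..n}" for i
      using payoff_eq[of i n cv c AZ beta R g K h] i cv noK unfolding T_def by auto
    have rest: "T - h i \<ge> 0" if "i \<in> {1..n}" for i
      using sum_rest_nonneg[of i n h] nn that unfolding T_def by auto
    have T0: "T \<ge> 0" unfolding T_def using nn by (intro sum_nonneg) auto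
    have one: "(1::nat) \<in> {1..n}" using n2 by simp
    have Tpos: "T > 0"
    proof (rule ccontr)
      assume "\<not> T > 0"
      then have "T = 0" using T0 by simp
      then have h1: "h 1 = 0" using rest[OF one] nn one by force
      define x where "x = min 1 (R/(2*(c+g)))"
      have x: "x > 0" "x \<le> 1" "x \<le> R/(2*(c+g))" unfolding x_def using R c g by auto
      have "payoff n R g K AZ beta cv (h(1:=x)) 1 = R - c*x - g/2*x^2"
        using pd[OF one, of x] x `T = 0` h1 by simp
      moreover have "payoff n R g K AZ beta cv h 1 = 0" using pe[OF one] `T = 0` by simp
      moreover have "payoff n R g K AZ beta cv (h(1:=x)) 1 \<le> payoff n R g K AZ beta cv h 1"
        using best one x by auto
      moreover have "c*x + g/2*x^2 < R"
      proof -
        have "x^2 \<le> x" using x by (simp add: power2_eq_square mult_le_one[of x x] mult_right_le_one_le)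
        then have "g/2*x^2 \<le> g*x" using g x by (simp add: mult_left_mono)
        moreover have "(c+g)*x \<le> R/2"
          using x(3) c g by (simp add: field_simps)
        ultimately show ?thesis using R by (simp add: algebra_simps)
      qed
      ultimately show False by simp
    qed
    have Spos: "T - h i > 0" if i: "i \<in> {1..n}" for i
    proof (rule ccontr)
      assume "\<not> T - h i > 0"
      then have hi: "h i = T" using rest[OF i] by simp
      have "payoff n R g K AZ beta cv (h(i:=T/2)) i = R - c*(T/2) - g/2*(T/2)^2"
        using pd[OF i, of "T/2"] Tpos hi by simp
      moreover have "payoff n R g K AZ beta cv h i = R - c*T - g/2*T^2"
        using pe[OF i] Tpos hi by simp
      moreover have "payoff n R g K AZ beta cv (h(i:=T/2)) i \<le> payoff n R g K AZ beta cv h i"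
        using best i Tpos by auto
      moreover have "c*(T/2) > 0" "g/2*(T/2)^2 \<le> g/2*T^2" using c Tpos g
        by (auto simp: power2_eq_square mult_left_mono)
      ultimately show False by (simp add: algebra_simps power2_eq_square)
    qed
    have foc: "R*(T - h i)/T^2 - c - g*h i = 0" if i: "i \<in> {1..n}" and hp: "h i > 0" for i
    proof -
      define S where "S = T - h i"
      have S: "S > 0" using Spos[OF i] unfolding S_def .
      have hS: "h i + S = T" unfolding S_def by simp
      have "R*S/(h i + S)^2 - c - g*h i = 0"
      proof (rule DERIV_local_max[OF f_deriv[of "h i" S R c g] hp])
        show "h i + S \<noteq> 0" using hS Tpos by simp
        show "\<forall>y. \<bar>h i - y\<bar> < h i \<longrightarrow> y/(y+S)*R - c*y - g/2*y^2 \<le> h i/(h i+S)*R - c*h i - g/2*(h i)^2"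
        proof (intro allI impI)
          fix y assume "\<bar>h i - y\<bar> < h i"
          then have y: "y > 0" by linarith
          have "y/(y+S)*R - c*y - g/2*y^2 = payoff n R g K AZ beta cv (h(i:=y)) i"
            using pd[OF i, of y] y S unfolding S_def by simp
          also have "\<dots> \<le> payoff n R g K AZ beta cv h i" using best i y by auto
          also have "\<dots> = h i/(h i+S)*R - c*h i - g/2*(h i)^2" using pe[OF i] Tpos hS by simp
          finally show "y/(y+S)*R - c*y - g/2*y^2 \<le> h i/(h i+S)*R - c*h i - g/2*(h i)^2" .
        qed
      qed
      then show ?thesis using hS unfolding S_def by simp
    qed
    have zero: "R/T \<le> c" if i: "i \<in> {1..n}" and h0i: "h i = 0" for i
    proof (rule ccontr)
      assume "\<not> R/T \<le> c"
      then have lpos: "R*T/(0+T)^2 - c - g*0 > 0" using Tpos by (simp add: power2_eq_square)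
      have "0 + T \<noteq> 0" using Tpos by simp
      from DERIV_pos_inc_right[OF f_deriv[OF this, of R c g] lpos]
      obtain d where d: "d > 0" and dd: "\<forall>e>0. e < d \<longrightarrow>
        0/(0+T)*R - c*0 - g/2*0^2 < (0+e)/((0+e)+T)*R - c*(0+e) - g/2*(0+e)^2" by blast
      have "0/(0+T)*R - c*0 - g/2*0^2 < (0+d/2)/((0+d/2)+T)*R - c*(0+d/2) - g/2*(0+d/2)^2"
        using dd d by (intro dd[rule_format]) auto
      then have "0 < (d/2)/((d/2)+T)*R - c*(d/2) - g/2*(d/2)^2" by simp
      also have "\<dots> = payoff n R g K AZ beta cv (h(i:=d/2)) i" using pd[OF i, of "d/2"] d Tpos h0i by simp
      also have "\<dots> \<le> payoff n R g K AZ beta cv h i" using best i d by auto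
      also have "\<dots> = 0" using pe[OF i] h0i by simp
      finally show False by simp
    qed
    have allpos: "h i > 0" if i: "i \<in> {1..n}" for i
    proof (rule ccontr)
      assume "\<not> h i > 0"
      then have "h i = 0" using nn i by force
      then have Rc: "R/T \<le> c" using zero i by blast
      have "\<exists>k\<in>{1..n}. h k > 0"
      proof (rule ccontr)
        assume "\<not> (\<exists>k\<in>{1..n}. h k > 0)"
        then have "\<forall>k\<in>{1..n}. h k = 0" using nn by force
        then have "T = 0" unfolding T_def by simp
        then show False using Tpos by simp
      qed
      then obtain k where k: "k \<in> {1..n}" "h k > 0" by blast
      have f: "R*(T - h k)/T^2 = c + g*h k" using foc[OF k] by simp
      have "R*(T - h k)/T^2 < R*T/T^2" using k Tpos R by (intro divide_strict_right_mono) auto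
      also have "R*T/T^2 = R/T" using Tpos by (simp add: power2_eq_square)
      finally have "c + g*h k < c" using f Rc by simp
      moreover have "g*h k > 0" using g k by simp
      ultimately show False by simp
    qed
    define a where "a = R/T^2"
    have apos: "a > 0" unfolding a_def using R Tpos by simp
    define v where "v = (a*T - c)/(a+g)"
    have hv: "h i = v" if i: "i \<in> {1..n}" for i
    proof -
      have "R*(T - h i)/T^2 = a*(T - h i)" unfolding a_def by simp
      then have "a*(T - h i) - c - g*h i = 0" using foc[OF i allpos[OF i]] by simp
      then show ?thesis unfolding v_def using apos g by (simp add: field_simps)
    qed
    have "T = n*v" unfolding T_def using hv by simp
    then have vT: "v = T/n" using n2 by simp
    have "R*(T - T/n)/T^2 - c - g*(T/n) = 0" using foc[OF one allpos[OF one]] hv[OF one] vT by simp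
    moreover have "R*(T - T/n)/T^2 = R*(real n - 1)/(n*T)" using Tpos n2 by (simp add: field_simps power2_eq_square)
    ultimately have "R*(real n - 1)/(n*T) = c + g*(T/n)" by simp
    then have "R*(real n - 1) = (c + g*(T/n))*(n*T)" using Tpos n2 by (simp add: field_simps)
    also have "\<dots> = g*T^2 + n*c*T" using n2 by (simp add: field_simps power2_eq_square)
    finally have "g*T^2 + n*c*T = R*(real n-1)" by simp
    then have "T = Hs" using root_unique[of g "real n" c T Hs] g c Tpos Hs by simp
    show "h = h0"
    proof
      fix i show "h i = h0 i"
        using hv vT `T = Hs` out unfolding h0_def by auto
    qed
  qed
  have "hNE n R g K AZ beta cv = h0" unfolding hNE_def
    using ex un by (rule the_equality)
  then show ?thesis unfolding h0_def Hs_def .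
qed



lemma key_bound:
  fixes m c c' g H H' \<Delta> Q R :: real
  assumes m: "m \<ge> 1" and c: "c > 0" and g: "g > 0" and H: "H > 0" and H': "H' > 0"
    and \<Delta>: "\<Delta> \<ge> 0" and cd: "c' = c - \<Delta>" and ch: "c' \<ge> c/2"
    and eq: "g*H^2 + m*c*H = Q" and eq': "g*H'^2 + m*c'*H' = Q"
  shows "\<bar>(R - c'*H' - g*H'^2/(2*m)) - (R - c*H - g*H^2/(2*m))
           - 1/m*(1 - (m*c + g*H)/(m*c + 2*g*H))*H*(m*\<Delta>)\<bar>
         \<le> (g*(2*Q/(m*c))*((m*c + 2*g*H)*(2*Q/(m*c)) + 2*m*c*H + 2*g*H^2)
              /(2*m*c^2*(m*c + 2*g*H))) * (m*\<Delta>)^2"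
proof -
  define E where "E = (R - c'*H' - g*H'^2/(2*m)) - (R - c*H - g*H^2/(2*m))
           - 1/m*(1 - (m*c + g*H)/(m*c + 2*g*H))*H*(m*\<Delta>)"
  define D1 where "D1 = g*(H+H') + m*c"
  define D2 where "D2 = m*c + 2*g*H"
  define B where "B = 2*Q/(m*c)"
  define M' where "M' = D2*H' + 2*m*c*H + 2*g*H^2"
  define MB where "MB = D2*B + 2*m*c*H + 2*g*H^2"
  have mpos: "m > 0" using m by simp
  have mc: "m*c > 0" using mpos c by simp
  have D2: "D2 > 0" unfolding D2_def using mc g H by (simp add: add_pos_pos)
  have D1: "D1 \<ge> m*c" unfolding D1_def using g H H' by simp
  have D1p: "D1 > 0" using D1 mc by simp
  have s1: "(H'-H)*D1 = m*\<Delta>*H'"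
  proof -
    have "(H'-H)*D1 - m*\<Delta>*H' = (g*H'^2 + m*c'*H') - (g*H^2 + m*c*H)"
      unfolding D1_def cd by (simp add: algebra_simps power2_eq_square)
    then show ?thesis using eq eq' by simp
  qed
  have cH: "c*H = (Q - g*H^2)/m" using eq mpos by (simp add: field_simps)
  have cH': "c'*H' = (Q - g*H'^2)/m" using eq' mpos by (simp add: field_simps)
  have fr: "1 - (m*c + g*H)/(m*c + 2*g*H) = g*H/D2"
    using D2 unfolding D2_def by (simp add: field_simps)
  have s2: "E = g*(H'^2 - H^2)/(2*m) - g*H^2*\<Delta>/D2"
  proof -
    have "E = c*H - c'*H' + g*H^2/(2*m) - g*H'^2/(2*m) - 1/m*(g*H/D2)*H*(m*\<Delta>)"
      unfolding E_def fr by simp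
    also have "\<dots> = (Q - g*H^2)/m - (Q - g*H'^2)/m + g*H^2/(2*m) - g*H'^2/(2*m) - g*H^2*\<Delta>/D2"
      unfolding cH cH' using mpos D2 by (simp add: power2_eq_square)
    also have "\<dots> = g*(H'^2 - H^2)/(2*m) - g*H^2*\<Delta>/D2"
      using mpos by (simp add: field_simps)
    finally show ?thesis .
  qed
  have s3: "E*(2*m*H'*D2) = g*(H'-H)^2*M'"
  proof -
    have "E*(2*m*H'*D2) = g*(H'^2 - H^2)*H'*D2 - 2*g*H^2*(m*\<Delta>*H')"
      unfolding s2 using mpos D2 by (simp add: field_simps)
    also have "\<dots> = g*(H'^2 - H^2)*H'*D2 - 2*g*H^2*((H'-H)*D1)" unfolding s1 ..
    also have "\<dots> = g*(H'-H)^2*M'"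
      unfolding M'_def D1_def D2_def by (simp add: algebra_simps power2_eq_square)
    finally show ?thesis .
  qed
  have den: "2*m*H'*D2 > 0" using mpos H' D2 by simp
  have Mp: "M' \<ge> 0"
  proof -
    have "D2*H' > 0" "2*m*c*H > 0" "2*g*H^2 \<ge> 0" using D2 H' mpos c g H by auto
    then show ?thesis unfolding M'_def by linarith
  qed
  have denz: "2*m*H'*D2 \<noteq> 0" using mpos H' D2 by simp
  have Ee: "E = g*(H'-H)^2*M'/(2*m*H'*D2)" using s3 denz by (metis nonzero_mult_div_cancel_right)
  have E0: "E \<ge> 0" unfolding Ee using g Mp den by simp
  have HB: "H' \<le> B"
  proof -
    have "m*(c/2)*H' \<le> m*c'*H'" using ch mpos H' by (simp add: mult_right_mono)
    also have "\<dots> \<le> Q"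
    proof -
      have "g*H'^2 \<ge> 0" using g by simp
      then show ?thesis using eq' by linarith
    qed
    finally have "m*(c/2)*H' \<le> Q" .
    then show ?thesis unfolding B_def using mc by (simp add: field_simps)
  qed
  have MB: "M' \<le> MB" unfolding M'_def MB_def using HB D2 by (simp add: mult_left_mono)
  have dH0: "H' - H \<ge> 0"
  proof -
    have "(H'-H)*D1 \<ge> 0" unfolding s1 using mpos \<Delta> H' by simp
    then show ?thesis using D1p by (simp add: zero_le_mult_iff)
  qed
  have dH: "H' - H \<le> \<Delta>*H'/c"
  proof -
    have "H' - H = m*\<Delta>*H'/D1" using s1 D1p by (simp add: field_simps)
    also have "\<dots> \<le> m*\<Delta>*H'/(m*c)" using D1 mc mpos \<Delta> H'
      by (intro divide_left_mono) auto
    also have "\<dots> = \<Delta>*H'/c" using mpos by simp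
    finally show ?thesis .
  qed
  have sq: "(H'-H)^2 \<le> (\<Delta>*H'/c)^2" by (rule power_mono[OF dH dH0])
  have "g*(H'-H)^2*M' \<le> g*(\<Delta>*H'/c)^2*M'"
    using mult_right_mono[OF mult_left_mono[OF sq, of g] Mp] g by simp
  then have "E \<le> g*(\<Delta>*H'/c)^2*M'/(2*m*H'*D2)"
    unfolding Ee using den by (simp add: divide_right_mono)
  also have "\<dots> = g*\<Delta>^2*H'*M'/(2*m*c^2*D2)"
    using H' c by (simp add: field_simps power2_eq_square)
  also have "\<dots> \<le> g*\<Delta>^2*B*MB/(2*m*c^2*D2)"
  proof -
    have B0: "B \<ge> 0" using HB H' by simp
    have "H'*M' \<le> B*MB" using mult_mono[OF HB MB B0 Mp] .
    then have "(g*\<Delta>^2)*(H'*M') \<le> (g*\<Delta>^2)*(B*MB)" using g by (simp add: mult_left_mono)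
    then have "g*\<Delta>^2*H'*M' \<le> g*\<Delta>^2*B*MB" by (simp add: mult.assoc)
    moreover have "2*m*c^2*D2 > 0" using mpos c D2 by simp
    ultimately show ?thesis by (simp add: divide_right_mono)
  qed
  also have "\<dots> = (g*B*MB/(2*m*c^2*D2))*\<Delta>^2" by simp
  also have "\<dots> \<le> (g*B*MB/(2*m*c^2*D2))*(m*\<Delta>)^2"
  proof (rule mult_left_mono)
    have "1*\<Delta> \<le> m*\<Delta>" using m \<Delta> by (rule mult_right_mono)
    then show "\<Delta>^2 \<le> (m*\<Delta>)^2" using \<Delta> by (simp add: power_mono)
    have "B \<ge> 0" using HB H' by simp
    moreover have "MB \<ge> 0" using MB Mp by simp
    ultimately show "0 \<le> g*B*MB/(2*m*c^2*D2)" using g mpos c D2 by simp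
  qed
  finally have "E \<le> (g*B*MB/(2*m*c^2*D2))*(m*\<Delta>)^2" .
  then have "\<bar>E\<bar> \<le> (g*B*MB/(2*m*c^2*D2))*(m*\<Delta>)^2" using E0 by simp
  then show ?thesis unfolding E_def B_def MB_def D2_def .
qed



lemma sum_payoff:
  fixes Hs c R g K :: real
  assumes n1: "n \<ge> 1" and Hs: "Hs > 0" and cv: "\<forall>i\<in>{1..n}. cv i = c"
    and noK: "\<forall>i\<in>{1..n}. \<not> (i \<notin> A0 \<and> 0 < beta i)"
  shows "(\<Sum>i\<in>{1..n}. payoff n R g K A0 beta cv (\<lambda>i. if i \<in> {1..n} then Hs/n else 0) i)
         = R - c*Hs - g*Hs^2/(2*n)"
proof -
  define h0 where "h0 = (\<lambda>i. if i \<in> {1..n} then Hs / n else (0::real))"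
  have sum_h0: "(\<Sum>j\<in>{1..n}. h0 j) = Hs" unfolding h0_def using n1 by simp
  define t where "t = (Hs/n)/Hs*R - c*(Hs/n) - g/2*(Hs/n)^2"
  have "(\<Sum>i\<in>{1..n}. payoff n R g K A0 beta cv h0 i) = (\<Sum>i\<in>{1..n}. t)"
  proof (rule sum.cong)
    fix i assume i: "i \<in> {1..n}"
    show "payoff n R g K A0 beta cv h0 i = t"
      using payoff_eq[of i n cv c A0 beta R g K h0] i cv noK Hs unfolding sum_h0 t_def
      by (simp add: h0_def)
  qed simp
  also have "\<dots> = n*t" by simp
  also have "\<dots> = R - c*Hs - g*Hs^2/(2*n)" unfolding t_def using n1 Hs
    by (simp add: field_simps power2_eq_square)
  finally show ?thesis unfolding h0_def .
qed

lemma zero_case: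
  fixes n :: nat and ct :: "nat \<Rightarrow> real" and cbar c0 R g K eta :: real
  assumes n2: "n \<ge> 2" and homog: "\<forall>i\<in>{1..n}. ct i = cbar" and cpos: "cbar > 0"
    and Rpos: "R > 0" and gpos: "g > 0"
  shows "Hstar n ct c0 eta R g K (\<lambda>_. 0) = Hr n R g cbar"
    and "Pistar n ct c0 eta R g K (\<lambda>_. 0) = R - cbar*Hr n R g cbar - g*(Hr n R g cbar)^2/(2*n)"
proof -
  have cv: "\<forall>i\<in>{1..n}. cost (ct i) c0 eta 0 = cbar" using homog unfolding cost_def by simp
  have hs: "hstar n ct c0 eta R g K (\<lambda>_. 0) = (\<lambda>i. if i \<in> {1..n} then Hr n R g cbar / n else 0)"
    unfolding hstar_def using NE_char[OF n2 Rpos gpos cpos, where cv="\<lambda>i. cost (ct i) c0 eta 0"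
        and beta="\<lambda>_. 0" and AZ="Azero n ct R g K" and K=K] cv by simp
  have n2r: "real n \<ge> 2" using n2 by simp
  have Hp: "Hr n R g cbar > 0" using Hr_prop[OF n2r Rpos gpos cpos] by simp
  show "Hstar n ct c0 eta R g K (\<lambda>_. 0) = Hr n R g cbar"
    unfolding Hstar_def hs using n2 by simp
  show "Pistar n ct c0 eta R g K (\<lambda>_. 0) = R - cbar*Hr n R g cbar - g*(Hr n R g cbar)^2/(2*n)"
    unfolding Pistar_def hs using sum_payoff[of n "Hr n R g cbar" "\<lambda>i. cost (ct i) c0 eta 0" cbar
        "Azero n ct R g K" "\<lambda>_. 0" R g K] n2 Hp cv by simp
qed

lemma star_case:
  fixes n :: nat and ct :: "nat \<Rightarrow> real" and cbar c0 R g K eta c' :: real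
  assumes n2: "n \<ge> 2" and homog: "\<forall>i\<in>{1..n}. ct i = cbar"
    and Rpos: "R > 0" and gpos: "g > 0" and A0: "Azero n ct R g K = {1..n}"
    and eta: "eta \<ge> 1" and c'def: "c' = cbar - (cbar - c0)/(2*eta)" and c'pos: "c' > 0"
  shows "Pistar n ct c0 eta R g K (betastar n ct eta R g K) = R - c'*Hr n R g c' - g*(Hr n R g c')^2/(2*n)"
    and "Ibar n ct c0 eta R g K = n*((cbar - c0)/(2*eta))"
proof -
  have bs: "betastar n ct eta R g K i = 1/eta" if "i \<in> {1..n}" for i
    unfolding betastar_def A0 using that eta by simp
  have cst: "cost cbar c0 eta (1/eta) = c'" unfolding cost_def c'def using eta
    by (simp add: field_simps power2_eq_square)
  have cv: "\<forall>i\<in>{1..n}. cost (ct i) c0 eta (betastar n ct eta R g K i) = c'"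
    using homog bs cst by simp
  have noK: "\<forall>i\<in>{1..n}. \<not> (i \<notin> Azero n ct R g K \<and> 0 < betastar n ct eta R g K i)"
    unfolding A0 by simp
  have hs: "hstar n ct c0 eta R g K (betastar n ct eta R g K) = (\<lambda>i. if i \<in> {1..n} then Hr n R g c' / n else 0)"
    unfolding hstar_def using NE_char[OF n2 Rpos gpos c'pos cv noK] by simp
  have n2r: "real n \<ge> 2" using n2 by simp
  have Hp: "Hr n R g c' > 0" using Hr_prop[OF n2r Rpos gpos c'pos] by simp
  show "Pistar n ct c0 eta R g K (betastar n ct eta R g K) = R - c'*Hr n R g c' - g*(Hr n R g c')^2/(2*n)"
    unfolding Pistar_def hs using sum_payoff[OF _ Hp cv noK, of R g K] n2 by simp
  have "Ibar n ct c0 eta R g K = (\<Sum>i\<in>{1..n}. (cbar - c0)/(2*eta))"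
    unfolding Ibar_def
  proof (rule sum.cong)
    fix i assume i: "i \<in> {1..n}"
    show "cost (ct i) c0 eta 0 - cost (ct i) c0 eta (betastar n ct eta R g K i) = (cbar - c0)/(2*eta)"
    proof -
      have "cost (ct i) c0 eta 0 = cbar" using homog i by (simp add: cost_def)
      then show ?thesis using cv i c'def by simp
    qed
  qed simp
  then show "Ibar n ct c0 eta R g K = n*((cbar - c0)/(2*eta))" by simp
qed

lemma bform:
  fixes m X Y :: real
  assumes "m > 0" "X > 0" "Y > 0"
  shows "1/m*(1 - (X + Y)/(X + 2*Y)) = Y/(m*(X + 2*Y))" and "Y/(m*(X + 2*Y)) > 0"
proof -
  show "1/m*(1 - (X + Y)/(X + 2*Y)) = Y/(m*(X + 2*Y))" using assms by (auto simp: field_simps)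
  have "m*(X + 2*Y) > 0" using assms by simp
  then show "Y/(m*(X + 2*Y)) > 0" using assms by simp
qed



theorem proposition5p5:
  fixes n :: nat and ct :: "nat \<Rightarrow> real" and cbar c0 R gam K eta1 :: real
  assumes n2: "n \<ge> 2"
    and homog: "\<forall>i\<in>{1..n}. ct i = cbar"
    and cpos: "cbar > 0"
    and c0le: "c0 \<le> cbar"
    and Rpos: "R > 0"
    and gpos: "gam > 0"
    and Kpos: "K > 0"
    and A0: "Azero n ct R gam K = {1..n}"
  shows "bcoef n ct c0 eta1 R gam K > 0
    \<and> (\<exists>C eta0. \<forall>eta \<ge> eta0.
          Astar n ct c0 eta R gam K (betastar n ct eta R gam K) = {1..n} \<longrightarrow>
          \<bar>Pistar n ct c0 eta R gam K (betastar n ct eta R gam K)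
            - Pistar n ct c0 eta R gam K (\<lambda>_. 0)
            - bcoef n ct c0 eta R gam K * Hstar n ct c0 eta R gam K (\<lambda>_. 0) * Ibar n ct c0 eta R gam K\<bar>
          \<le> C * (Ibar n ct c0 eta R gam K) ^ 2)
    \<and> ((\<lambda>g. bcoef n ct c0 eta1 R g K) \<longlongrightarrow> 0) (at_right 0)"
proof -
  have n2r: "real n \<ge> 2" using n2 by simp
  have npos: "real n > 0" using n2 by simp
  have csum: "csum n ct = n*cbar" unfolding csum_def using homog by simp
  have bc: "bcoef n ct c0 eta R g K = Hr n R g cbar * g/(n*(n*cbar + 2*(g*Hr n R g cbar)))"
    and bcp: "bcoef n ct c0 eta R g K > 0"
    if g: "g > 0" for eta g
  proof -
    have Hp: "Hr n R g cbar > 0" using Hr_prop[OF n2r Rpos g cpos] by simp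
    have X: "n*cbar > 0" using npos cpos by simp
    have Y: "g*Hr n R g cbar > 0" using Hp g by simp
    have e: "bcoef n ct c0 eta R g K = 1/n*(1 - (n*cbar + g*Hr n R g cbar)/(n*cbar + 2*(g*Hr n R g cbar)))"
      unfolding bcoef_def Let_def csum zero_case(1)[OF n2 homog cpos Rpos g] by (simp add: mult.assoc)
    show "bcoef n ct c0 eta R g K = Hr n R g cbar * g/(n*(n*cbar + 2*(g*Hr n R g cbar)))"
      unfolding e bform(1)[OF npos X Y] by (simp add: mult.commute)
    show "bcoef n ct c0 eta R g K > 0"
      unfolding e bform(1)[OF npos X Y] using bform(2)[OF npos X Y] .
  qed
  define H0 where "H0 = Hr n R gam cbar"
  define Q where "Q = R*(real n - 1)"
  have H0: "H0 > 0" "gam*H0^2 + n*cbar*H0 = Q"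
    using Hr_prop[OF n2r Rpos gpos cpos] unfolding H0_def Q_def by auto
  define C where "C = (gam*(2*Q/(n*cbar))*((n*cbar + 2*gam*H0)*(2*Q/(n*cbar)) + 2*n*cbar*H0 + 2*gam*H0^2)
              /(2*n*cbar^2*(n*cbar + 2*gam*H0)))"
  define eta0 where "eta0 = max 1 ((cbar - c0)/cbar)"
  have part2: "\<forall>eta \<ge> eta0.
          Astar n ct c0 eta R gam K (betastar n ct eta R gam K) = {1..n} \<longrightarrow>
          \<bar>Pistar n ct c0 eta R gam K (betastar n ct eta R gam K)
            - Pistar n ct c0 eta R gam K (\<lambda>_. 0)
            - bcoef n ct c0 eta R gam K * Hstar n ct c0 eta R gam K (\<lambda>_. 0) * Ibar n ct c0 eta R gam K\<bar>
          \<le> C * (Ibar n ct c0 eta R gam K) ^ 2"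
  proof (intro allI impI)
    fix eta assume eta: "eta \<ge> eta0"
    have eta1: "eta \<ge> 1" using eta unfolding eta0_def by simp
    have eta2: "eta \<ge> (cbar - c0)/cbar" using eta unfolding eta0_def by simp
    define \<Delta> where "\<Delta> = (cbar - c0)/(2*eta)"
    define c' where "c' = cbar - \<Delta>"
    have D0: "\<Delta> \<ge> 0" unfolding \<Delta>_def using c0le eta1 by simp
    have Dle: "\<Delta> \<le> cbar/2"
    proof -
      have "cbar - c0 \<le> eta*cbar" using eta2 cpos by (simp add: field_simps)
      then show ?thesis unfolding \<Delta>_def using eta1 cpos by (simp add: field_simps)
    qed
    have ch: "c' \<ge> cbar/2" unfolding c'_def using Dle by simp
    have c'pos: "c' > 0" using ch cpos by simp
    have c'd: "c' = cbar - (cbar - c0)/(2*eta)" unfolding c'_def \<Delta>_def ..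
    define H' where "H' = Hr n R gam c'"
    have H': "H' > 0" "gam*H'^2 + n*c'*H' = Q"
      using Hr_prop[OF n2r Rpos gpos c'pos] unfolding H'_def Q_def by auto
    have P1: "Pistar n ct c0 eta R gam K (betastar n ct eta R gam K) = R - c'*H' - gam*H'^2/(2*n)"
      using star_case(1)[OF n2 homog Rpos gpos A0 eta1 c'd c'pos] unfolding H'_def .
    have Ib: "Ibar n ct c0 eta R gam K = n*\<Delta>"
      using star_case(2)[OF n2 homog Rpos gpos A0 eta1 c'd c'pos] unfolding \<Delta>_def .
    have P0: "Pistar n ct c0 eta R gam K (\<lambda>_. 0) = R - cbar*H0 - gam*H0^2/(2*n)"
      using zero_case(2)[OF n2 homog cpos Rpos gpos] unfolding H0_def .
    have HS: "Hstar n ct c0 eta R gam K (\<lambda>_. 0) = H0"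
      using zero_case(1)[OF n2 homog cpos Rpos gpos] unfolding H0_def .
    have B: "bcoef n ct c0 eta R gam K = 1/n*(1 - (n*cbar + gam*H0)/(n*cbar + 2*gam*H0))"
      unfolding bcoef_def Let_def csum HS ..
    have m1: "real n \<ge> 1" using n2 by simp
    show "\<bar>Pistar n ct c0 eta R gam K (betastar n ct eta R gam K)
            - Pistar n ct c0 eta R gam K (\<lambda>_. 0)
            - bcoef n ct c0 eta R gam K * Hstar n ct c0 eta R gam K (\<lambda>_. 0) * Ibar n ct c0 eta R gam K\<bar>
          \<le> C * (Ibar n ct c0 eta R gam K) ^ 2"
      unfolding P1 P0 B HS Ib C_def
      using key_bound[OF m1 cpos gpos H0(1) H'(1) D0 c'_def ch H0(2) H'(2), of R] by simp
  qed
  have part3: "((\<lambda>g. bcoef n ct c0 eta1 R g K) \<longlongrightarrow> 0) (at_right 0)"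
  proof (rule tendsto_sandwich[where f="\<lambda>_. 0" and h="\<lambda>g. g * (Q/(n*cbar)/(n*(n*cbar)))"])
    show "\<forall>\<^sub>F g in at_right 0. (0::real) \<le> bcoef n ct c0 eta1 R g K"
      using eventually_at_right_less[of "0::real"]
      by (rule eventually_mono) (simp add: bcp less_imp_le)
    show "\<forall>\<^sub>F g in at_right 0. bcoef n ct c0 eta1 R g K \<le> g * (Q/(n*cbar)/(n*(n*cbar)))"
      using eventually_at_right_less[of "0::real"]
    proof (rule eventually_mono)
      fix g :: real assume g: "0 < g"
      define Hg where "Hg = Hr n R g cbar"
      have Hg: "Hg > 0" "g*Hg^2 + n*cbar*Hg = Q"
        using Hr_prop[OF n2r Rpos g cpos] unfolding Hg_def Q_def by auto
      have X: "n*cbar > 0" using npos cpos by simp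
      have Hle: "Hg \<le> Q/(n*cbar)"
      proof -
        have "g*Hg^2 \<ge> 0" using g by simp
        then have "n*cbar*Hg \<le> Q" using Hg by linarith
        then show ?thesis using X by (simp add: field_simps)
      qed
      have "bcoef n ct c0 eta1 R g K = Hg*g/(n*(n*cbar + 2*(g*Hg)))" unfolding Hg_def by (rule bc[OF g])
      also have "\<dots> \<le> Hg*g/(n*(n*cbar))"
        using Hg g X npos by (intro divide_left_mono mult_left_mono) (auto intro!: mult_pos_pos add_pos_pos)
      also have "\<dots> \<le> (Q/(n*cbar))*g/(n*(n*cbar))"
        using Hle g X npos by (intro divide_right_mono mult_right_mono) auto
      also have "\<dots> = g * (Q/(n*cbar)/(n*(n*cbar)))" by simp
      finally show "bcoef n ct c0 eta1 R g K \<le> g * (Q/(n*cbar)/(n*(n*cbar)))" .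
    qed
    show "((\<lambda>_. 0::real) \<longlongrightarrow> 0) (at_right 0)" by simp
    have "((\<lambda>g::real. g * (Q/(n*cbar)/(n*(n*cbar)))) \<longlongrightarrow> 0 * (Q/(n*cbar)/(n*(n*cbar)))) (at_right 0)"
      by (intro tendsto_intros)
    then show "((\<lambda>g::real. g * (Q/(n*cbar)/(n*(n*cbar)))) \<longlongrightarrow> 0) (at_right 0)" by simp
  qed
  show ?thesis using bcp[OF gpos] part2 part3 by blast
qed

end
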